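(* System 2 has exactly four fixed points, the double poles $p_{\varepsilon_1,\varepsilon_2}=((0,0,\varepsilon_11),(0,0,\varepsilon_21))$, $\varepsilon_1,\varepsilon_2\in\{+,-\}$. The fixed points $p_{+,+}$, $p_{-,+}$ and $p_{-,-}$ are non-degenerate of elliptic-elliptic type for all $t\in[0,1]$, while $p_{+,-}$ is non-degenerate of elliptic-elliptic type if $t<t^-$ or $t>t^+$, non-degenerate of focus-focus type if $t^-<t<t^+$, and degenerate if $t\in\{t^-,t^+\}$, where $$t^\pm=\frac{R_2}{2R_2+R_1\mp2\sqrt{R_1R_2}}.$$
   Context: Let $0<R_1<R_2$ and $t\in[0,1]$. On $M=S^2\times S^2$ with Cartesian coordinates $(x_i,y_i,z_i)$, $x_i^2+y_i^2+z_i^2=1$, and cylindrical coordinates $(\theta_i,z_i)$, $\theta_i=\arg(x_i+iy_i)$, System 2 is the $b$-integrable system with $Z=\{z_1=0\}$, $b$-symplectic form $\omega=R_1\frac{dz_1}{z_1}\wedge d\theta_1+R_2\,dz_2\wedge d\theta_2$ (in the local chart $(x_1,y_1,x_2,y_2)$ on $\{\varepsilon_1z_1>0,\varepsilon_2z_2>0\}$: $\omega=-\frac{R_1}{1-x_1^2-y_1^2}dx_1\wedge dy_1-\varepsilon_2\frac{R_2}{\sqrt{1-x_2^2-y_2^2}}dx_2\wedge dy_2$), and $L=R_1\log|z_1|+R_2z_2$, $H=(1-t)\log|z_1|+t(x_1x_2+y_1y_2+z_1z_2)$. A fixed point is a point where $dL=dH=0$. A fixed point $p$ with $\Omega$ the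 matrix of $\omega$ at $p$ is non-degenerate if $A_L=\Omega^{-1}d^2L(p)$, $A_H=\Omega^{-1}d^2H(p)$ span a Cartan subalgebra of $\mathfrak{sp}(4,\mathbb R)$; it is elliptic-elliptic if some combination $c_1A_L+c_2A_H$ has four distinct eigenvalues $\pm i\alpha,\pm i\beta$ ($\alpha\ne\beta$ nonzero reals) and focus-focus if such a combination has eigenvalues $\pm\alpha\pm i\beta$ with $\alpha,\beta$ nonzero reals. *)

theory Defs
  imports "HOL-Analysis.Analysis"
begin

type_synonym pt = "(real \<times> real \<times> real) \<times> (real \<times> real \<times> real)"

definition S2 :: "(real \<times> real \<times> real) set" where
  "S2 = {(x, y, z). x^2 + y^2 + z^2 = 1}"

definition Mspace :: "pt set" where
  "Mspace = S2 \<times> S2"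

definition z1_of :: "pt \<Rightarrow> real" where
  "z1_of p = (case p of ((x1, y1, z1), (x2, y2, z2)) \<Rightarrow> z1)"

text \<open>The integrable system L, H (on M minus Z = {z1 = 0}).\<close>
definition Lfun :: "real \<Rightarrow> real \<Rightarrow> pt \<Rightarrow> real" where
  "Lfun R1 R2 p = (case p of ((x1, y1, z1), (x2, y2, z2)) \<Rightarrow> R1 * ln \<bar>z1\<bar> + R2 * z2)"

definition Hfun :: "real \<Rightarrow> pt \<Rightarrow> real" where
  "Hfun t p = (case p of ((x1, y1, z1), (x2, y2, z2)) \<Rightarrow>
      (1 - t) * ln \<bar>z1\<bar> + t * (x1 * x2 + y1 * y2 + z1 * z2))"

definition is_fixed_point :: "real \<Rightarrow> real \<Rightarrow> real \<Rightarrow> pt \<Rightarrow> bool" where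
  "is_fixed_point R1 R2 t p \<longleftrightarrow>
     p \<in> Mspace \<and> z1_of p \<noteq> 0 \<and>
     (Lfun R1 R2 has_derivative (\<lambda>_. 0)) (at p within Mspace) \<and>
     (Hfun t has_derivative (\<lambda>_. 0)) (at p within Mspace)"

definition pole :: "real \<Rightarrow> real \<Rightarrow> pt" where
  "pole e1 e2 = ((0, 0, e1), (0, 0, e2))"

definition chart_inv :: "real \<Rightarrow> real \<Rightarrow> real^4 \<Rightarrow> pt" where
  "chart_inv e1 e2 u =
     ((u$1, u$2, e1 * sqrt (1 - (u$1)^2 - (u$2)^2)),
      (u$3, u$4, e2 * sqrt (1 - (u$3)^2 - (u$4)^2)))"

definition chart :: "pt \<Rightarrow> real^4" where
  "chart p = (case p of ((x1, y1, z1), (x2, y2, z2)) \<Rightarrow> vector [x1, y1, x2, y2])"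

text \<open>Matrix of the b-symplectic form in the chart (coordinates ordered x1,y1,x2,y2),
  \<Omega>_ij = \<omega>(d_i, d_j).\<close>
definition Omega :: "real \<Rightarrow> real \<Rightarrow> real \<Rightarrow> real^4 \<Rightarrow> real^4^4" where
  "Omega R1 R2 e2 u =
     (let a = - R1 / (1 - (u$1)^2 - (u$2)^2);
          b = - e2 * R2 / sqrt (1 - (u$3)^2 - (u$4)^2)
      in vector [vector [0, a, 0, 0], vector [-a, 0, 0, 0],
                 vector [0, 0, 0, b], vector [0, 0, -b, 0]])"

definition pdiff :: "(real^4 \<Rightarrow> real) \<Rightarrow> 4 \<Rightarrow> real^4 \<Rightarrow> real" where
  "pdiff f i u = deriv (\<lambda>s. f (u + s *\<^sub>R axis i 1)) 0"

definition hessian :: "(real^4 \<Rightarrow> real) \<Rightarrow> real^4 \<Rightarrow> real^4^4" where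
  "hessian f u = (\<chi> i j. pdiff (\<lambda>w. pdiff f j w) i u)"

definition A_L :: "real \<Rightarrow> real \<Rightarrow> real \<Rightarrow> real \<Rightarrow> real^4 \<Rightarrow> real^4^4" where
  "A_L R1 R2 e1 e2 u = matrix_inv (Omega R1 R2 e2 u) ** hessian (Lfun R1 R2 \<circ> chart_inv e1 e2) u"

definition A_H :: "real \<Rightarrow> real \<Rightarrow> real \<Rightarrow> real \<Rightarrow> real \<Rightarrow> real^4 \<Rightarrow> real^4^4" where
  "A_H R1 R2 t e1 e2 u = matrix_inv (Omega R1 R2 e2 u) ** hessian (Hfun t \<circ> chart_inv e1 e2) u"

definition sp_alg :: "real^4^4 \<Rightarrow> (real^4^4) set" where
  "sp_alg Om = {A. transpose A ** Om + Om ** A = 0}"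

definition bracket :: "real^4^4 \<Rightarrow> real^4^4 \<Rightarrow> real^4^4" where
  "bracket X Y = X ** Y - Y ** X"

definition lie_subalgebra :: "(real^4^4) set \<Rightarrow> (real^4^4) set \<Rightarrow> bool" where
  "lie_subalgebra g h \<longleftrightarrow> subspace h \<and> h \<subseteq> g \<and> (\<forall>X\<in>h. \<forall>Y\<in>h. bracket X Y \<in> h)"

fun lower_central :: "(real^4^4) set \<Rightarrow> nat \<Rightarrow> (real^4^4) set" where
  "lower_central h 0 = h"
| "lower_central h (Suc k) = span {bracket X Y | X Y. X \<in> h \<and> Y \<in> lower_central h k}"

definition lie_nilpotent :: "(real^4^4) set \<Rightarrow> bool" where
  "lie_nilpotent h \<longleftrightarrow> (\<exists>k. lower_central h k = {0})"

definition normalizer :: "(real^4^4) set \<Rightarrow> (real^4^4) set \<Rightarrow> (real^4^4) set" where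
  "normalizer g h = {X \<in> g. \<forall>Y\<in>h. bracket X Y \<in> h}"

definition cartan_subalgebra :: "(real^4^4) set \<Rightarrow> (real^4^4) set \<Rightarrow> bool" where
  "cartan_subalgebra g h \<longleftrightarrow> lie_subalgebra g h \<and> lie_nilpotent h \<and> normalizer g h = h"

definition cmat :: "real^4^4 \<Rightarrow> complex^4^4" where
  "cmat A = (\<chi> i j. complex_of_real (A $ i $ j))"

definition eigenvalues :: "real^4^4 \<Rightarrow> complex set" where
  "eigenvalues A = {c. det (cmat A - mat c) = 0}"

definition elliptic_elliptic :: "real^4^4 \<Rightarrow> real^4^4 \<Rightarrow> bool" where
  "elliptic_elliptic A B \<longleftrightarrow>
     (\<exists>c1 c2 \<alpha> \<beta> :: real. \<alpha> \<noteq> 0 \<and> \<beta> \<noteq> 0 \<and> \<alpha> \<noteq> \<beta> \<and>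
        card {Complex 0 \<alpha>, Complex 0 (-\<alpha>), Complex 0 \<beta>, Complex 0 (-\<beta>)} = 4 \<and>
        eigenvalues (c1 *\<^sub>R A + c2 *\<^sub>R B) =
          {Complex 0 \<alpha>, Complex 0 (-\<alpha>), Complex 0 \<beta>, Complex 0 (-\<beta>)})"

definition focus_focus :: "real^4^4 \<Rightarrow> real^4^4 \<Rightarrow> bool" where
  "focus_focus A B \<longleftrightarrow>
     (\<exists>c1 c2 \<alpha> \<beta> :: real. \<alpha> \<noteq> 0 \<and> \<beta> \<noteq> 0 \<and>
        eigenvalues (c1 *\<^sub>R A + c2 *\<^sub>R B) =
          {Complex \<alpha> \<beta>, Complex \<alpha> (-\<beta>), Complex (-\<alpha>) \<beta>, Complex (-\<alpha>) (-\<beta>)})"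

text \<open>Non-degeneracy and type of the fixed point p_{e1,e2} = pole e1 e2, computed in the chart
  on {e1 z1 > 0, e2 z2 > 0}.\<close>
definition nondegenerate_at :: "real \<Rightarrow> real \<Rightarrow> real \<Rightarrow> pt \<Rightarrow> real \<Rightarrow> real \<Rightarrow> bool" where
  "nondegenerate_at R1 R2 t p e1 e2 \<longleftrightarrow>
     cartan_subalgebra (sp_alg (Omega R1 R2 e2 (chart p)))
       (span {A_L R1 R2 e1 e2 (chart p), A_H R1 R2 t e1 e2 (chart p)})"

definition nondeg_EE :: "real \<Rightarrow> real \<Rightarrow> real \<Rightarrow> real \<Rightarrow> real \<Rightarrow> bool" where
  "nondeg_EE R1 R2 t e1 e2 \<longleftrightarrow> nondegenerate_at R1 R2 t (pole e1 e2) e1 e2 \<and>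
     elliptic_elliptic (A_L R1 R2 e1 e2 (chart (pole e1 e2))) (A_H R1 R2 t e1 e2 (chart (pole e1 e2)))"

definition nondeg_FF :: "real \<Rightarrow> real \<Rightarrow> real \<Rightarrow> real \<Rightarrow> real \<Rightarrow> bool" where
  "nondeg_FF R1 R2 t e1 e2 \<longleftrightarrow> nondegenerate_at R1 R2 t (pole e1 e2) e1 e2 \<and>
     focus_focus (A_L R1 R2 e1 e2 (chart (pole e1 e2))) (A_H R1 R2 t e1 e2 (chart (pole e1 e2)))"

definition t_minus :: "real \<Rightarrow> real \<Rightarrow> real" where
  "t_minus R1 R2 = R2 / (2 * R2 + R1 + 2 * sqrt (R1 * R2))"

definition t_plus :: "real \<Rightarrow> real \<Rightarrow> real" where
  "t_plus R1 R2 = R2 / (2 * R2 + R1 - 2 * sqrt (R1 * R2))"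

end

theory Submission
  imports Defs
begin



lemma comp_deriv[derivative_intros]: "((\<lambda>w::real^4. w $ i) has_derivative (\<lambda>h. h $ i)) F"
  by (rule bounded_linear.has_derivative[OF bounded_linear_vec_nth has_derivative_ident])

definition S4 :: "(real^4) set" where
  "S4 = {w. (w$1)^2 + (w$2)^2 < 1 \<and> (w$3)^2 + (w$4)^2 < 1}"

lemma open_S4: "open S4"
  unfolding S4_def
  by (intro open_Collect_conj open_Collect_less continuous_intros)

definition GL :: "real \<Rightarrow> real \<Rightarrow> real \<Rightarrow> real^4 \<Rightarrow> real^4" where
  "GL R1 R2 e2 w = vector [- R1 * w$1 / (1 - (w$1)^2 - (w$2)^2), - R1 * w$2 / (1 - (w$1)^2 - (w$2)^2),
      - e2 * R2 * w$3 / sqrt (1 - (w$3)^2 - (w$4)^2), - e2 * R2 * w$4 / sqrt (1 - (w$3)^2 - (w$4)^2)]"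

lemma v4: "(vector [a,b,c,d] :: ('a::zero)^4) $ 1 = a"
 "(vector [a,b,c,d] :: ('a::zero)^4) $ 2 = b"
 "(vector [a,b,c,d] :: ('a::zero)^4) $ 3 = c"
 "(vector [a,b,c,d] :: ('a::zero)^4) $ 4 = d"
  unfolding vector_def by simp_all

lemma auxL: fixes a b R1 R2 e2 h1 h2 h3 h4 x1 x2 x3 x4 :: real
  shows "R1 * (inverse a * (- (2 * h1 * x1) - 2 * h2 * x2)) / 2 + R2 * (e2 * ((- (2 * h3 * x3) - 2 * h4 * x4) * inverse b)) / 2
   = - (R1 * x1 * h1 / a) - R1 * x2 * h2 / a - e2 * R2 * x3 * h3 / b - e2 * R2 * x4 * h4 / b"
  by (simp add: inverse_eq_divide diff_divide_distrib add_divide_distrib) (simp add: field_simps)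

lemma L_grad:
  assumes e1: "\<bar>e1\<bar> = 1" and w: "w \<in> S4"
  shows "((Lfun R1 R2 \<circ> chart_inv e1 e2) has_derivative (\<lambda>h. GL R1 R2 e2 w \<bullet> h)) (at w)"
proof -
  define F0 where "F0 = (\<lambda>w::real^4. R1 * (ln (1 - (w$1)^2 - (w$2)^2) / 2) + R2 * (e2 * sqrt (1 - (w$3)^2 - (w$4)^2)))"
  have eq: "F0 x = (Lfun R1 R2 \<circ> chart_inv e1 e2) x" if "x \<in> S4" for x
  proof -
    have p: "0 < 1 - (x$1)^2 - (x$2)^2" using that by (auto simp: S4_def)
    have "\<bar>e1 * sqrt (1 - (x$1)^2 - (x$2)^2)\<bar> = sqrt (1 - (x$1)^2 - (x$2)^2)"
      using p e1 by (simp add: abs_mult)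
    then show ?thesis using p
      by (simp add: F0_def Lfun_def chart_inv_def ln_sqrt)
  qed
  have p1: "0 < 1 - (w$1)^2 - (w$2)^2" and p2: "0 < 1 - (w$3)^2 - (w$4)^2" using w by (auto simp: S4_def)
  have "(F0 has_derivative (\<lambda>h. GL R1 R2 e2 w \<bullet> h)) (at w)"
    unfolding F0_def
    apply (rule has_derivative_eq_rhs)
     apply (auto intro!: derivative_eq_intros simp: p1 p2)[1]
    apply (use p1 p2 in linarith)+
    apply (rule ext)
    apply (simp add: GL_def inner_vec_def sum_4 v4)
    apply (rule auxL)
    done
  then show ?thesis
    by (rule has_derivative_transform_within_open[OF _ open_S4 w eq])
qed


lemma line_deriv:
  fixes f :: "real^4 \<Rightarrow> real"
  assumes "(f has_derivative (\<lambda>h. c \<bullet> h)) (at w)"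
  shows "((\<lambda>s. f (w + s *\<^sub>R axis i 1)) has_field_derivative c $ i) (at 0)"
proof -
  have d1: "((\<lambda>s::real. w + s *\<^sub>R axis i 1) has_derivative (\<lambda>s. s *\<^sub>R axis i 1)) (at 0)"
    by (auto intro!: derivative_eq_intros)
  have d2: "(f has_derivative (\<lambda>h. c \<bullet> h)) (at (w + 0 *\<^sub>R axis i 1))"
    using assms by simp
  have "((\<lambda>s. f (w + s *\<^sub>R axis i 1)) has_derivative (\<lambda>s. c \<bullet> (s *\<^sub>R axis i 1))) (at 0)"
    using has_derivative_compose[OF d1 d2] by simp
  moreover have "(\<lambda>s. c \<bullet> (s *\<^sub>R axis i 1)) = (*) (c $ i)"
    by (rule ext) (simp add: inner_axis)
  ultimately show ?thesis
    by (simp add: has_field_derivative_def)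
qed

lemma pdiff_eq:
  assumes "(F has_derivative (\<lambda>h. G \<bullet> h)) (at w)"
  shows "pdiff F j w = G $ j"
  unfolding pdiff_def using line_deriv[OF assms] by (rule DERIV_imp_deriv)

lemma hessian_eq:
  fixes F :: "real^4 \<Rightarrow> real" and G :: "real^4 \<Rightarrow> real^4" and Hm :: "real^4^4"
  assumes S: "open S" "u \<in> S"
    and dF: "\<And>w. w \<in> S \<Longrightarrow> (F has_derivative (\<lambda>h. G w \<bullet> h)) (at w)"
    and dG: "\<And>j. ((\<lambda>w. G w $ j) has_derivative (\<lambda>h. Hm $ j \<bullet> h)) (at u)"
  shows "hessian F u = (\<chi> i j. Hm $ j $ i)"
proof -
  have "hessian F u $ i $ j = Hm $ j $ i" for i j
  proof -
    let ?T = "{s::real. u + s *\<^sub>R axis i 1 \<in> S}"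
    have oT: "open ?T"
      using open_vimage[OF S(1), of "\<lambda>s::real. u + s *\<^sub>R axis i 1"]
      by (simp add: vimage_def continuous_on_add continuous_on_const continuous_on_scaleR continuous_on_id)
    have 0: "0 \<in> ?T" using S by simp
    have "((\<lambda>s. G (u + s *\<^sub>R axis i 1) $ j) has_field_derivative Hm $ j $ i) (at 0)"
      by (rule line_deriv[OF dG])
    then have "((\<lambda>s. pdiff F j (u + s *\<^sub>R axis i 1)) has_field_derivative Hm $ j $ i) (at 0)"
      by (rule has_field_derivative_transform_within_open[OF _ oT 0])
         (use pdiff_eq[OF dF] in auto)
    then show ?thesis
      unfolding hessian_def by (simp add: pdiff_def[of "pdiff F j"] DERIV_imp_deriv)
  qed
  then show ?thesis by (simp add: vec_eq_iff)
qed

definition GH :: "real \<Rightarrow> real \<Rightarrow> real \<Rightarrow> real^4 \<Rightarrow> real^4" where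
  "GH t e1 e2 w = vector [
     - (1 - t) * w$1 / (1 - (w$1)^2 - (w$2)^2) + t * (w$3 - e1 * e2 * w$1 * sqrt (1 - (w$3)^2 - (w$4)^2) / sqrt (1 - (w$1)^2 - (w$2)^2)),
     - (1 - t) * w$2 / (1 - (w$1)^2 - (w$2)^2) + t * (w$4 - e1 * e2 * w$2 * sqrt (1 - (w$3)^2 - (w$4)^2) / sqrt (1 - (w$1)^2 - (w$2)^2)),
     t * (w$1 - e1 * e2 * w$3 * sqrt (1 - (w$1)^2 - (w$2)^2) / sqrt (1 - (w$3)^2 - (w$4)^2)),
     t * (w$2 - e1 * e2 * w$4 * sqrt (1 - (w$1)^2 - (w$2)^2) / sqrt (1 - (w$3)^2 - (w$4)^2))]"

lemma auxH: fixes T a sa sb e1 e2 h1 h2 h3 h4 x1 x2 x3 x4 :: real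
  shows "(1 - T) * (inverse a * (- (2 * h1 * x1) - 2 * h2 * x2)) / 2 +
     T * (x1 * h3 + h1 * x3 + (x2 * h4 + h2 * x4) +
       e1 * e2 * (sa * ((- (2 * h3 * x3) - 2 * h4 * x4) * inverse sb) / 2 +
         (- (2 * h1 * x1) - 2 * h2 * x2) * inverse sa * sb / 2)) =
   ((T - 1) * x1 / a + T * (x3 - e1 * e2 * x1 * sb / sa)) * h1 +
   ((T - 1) * x2 / a + T * (x4 - e1 * e2 * x2 * sb / sa)) * h2 +
   T * (x1 - e1 * e2 * x3 * sa / sb) * h3 +
   T * (x2 - e1 * e2 * x4 * sa / sb) * h4"
  by (cases "a = 0"; simp add: inverse_eq_divide diff_divide_distrib add_divide_distrib; simp add: field_simps)

lemma H_grad: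
  assumes e1: "\<bar>e1\<bar> = 1" and w: "w \<in> S4"
  shows "((Hfun t \<circ> chart_inv e1 e2) has_derivative (\<lambda>h. GH t e1 e2 w \<bullet> h)) (at w)"
proof -
  define F0 where "F0 = (\<lambda>w::real^4. (1 - t) * (ln (1 - (w$1)^2 - (w$2)^2) / 2) +
      t * (w$1 * w$3 + w$2 * w$4 + e1 * e2 * (sqrt (1 - (w$1)^2 - (w$2)^2) * sqrt (1 - (w$3)^2 - (w$4)^2))))"
  have eq: "F0 x = (Hfun t \<circ> chart_inv e1 e2) x" if "x \<in> S4" for x
  proof -
    have p: "0 < 1 - (x$1)^2 - (x$2)^2" using that by (auto simp: S4_def)
    have "\<bar>e1 * sqrt (1 - (x$1)^2 - (x$2)^2)\<bar> = sqrt (1 - (x$1)^2 - (x$2)^2)"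
      using p e1 by (simp add: abs_mult)
    then show ?thesis using p
      by (simp add: F0_def Hfun_def chart_inv_def ln_sqrt field_simps)
  qed
  have p1: "0 < 1 - (w$1)^2 - (w$2)^2" and p2: "0 < 1 - (w$3)^2 - (w$4)^2" using w by (auto simp: S4_def)
  have "(F0 has_derivative (\<lambda>h. GH t e1 e2 w \<bullet> h)) (at w)"
    unfolding F0_def
    apply (rule has_derivative_eq_rhs)
     apply (auto intro!: derivative_eq_intros simp: p1 p2)[1]
    apply (use p1 p2 in linarith)+
    apply (rule ext)
    apply (simp add: GH_def inner_vec_def sum_4 v4)
    apply (rule auxH)
    done
  then show ?thesis
    by (rule has_derivative_transform_within_open[OF _ open_S4 w eq])
qed

definition HmL :: "real \<Rightarrow> real \<Rightarrow> real \<Rightarrow> real^4^4" where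
  "HmL R1 R2 e2 = vector [vector [-R1,0,0,0], vector [0,-R1,0,0], vector [0,0,-e2*R2,0], vector [0,0,0,-e2*R2]]"

definition HmH :: "real \<Rightarrow> real \<Rightarrow> real \<Rightarrow> real^4^4" where
  "HmH t e1 e2 = vector [vector [-(1-t) - t*e1*e2, 0, t, 0], vector [0, -(1-t) - t*e1*e2, 0, t],
      vector [t, 0, -t*e1*e2, 0], vector [0, t, 0, -t*e1*e2]]"

lemma GL_d2: "((\<lambda>w. GL R1 R2 e2 w $ j) has_derivative (\<lambda>h. HmL R1 R2 e2 $ j \<bullet> h)) (at 0)"
  using exhaust_4[of j]
  apply (elim disjE)
     apply (simp_all only: GL_def HmL_def v4)
     apply (rule has_derivative_eq_rhs, (auto intro!: derivative_eq_intros)[1], simp add: inner_vec_def sum_4 v4)+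
  done

lemma GH_d2: "((\<lambda>w. GH t e1 e2 w $ j) has_derivative (\<lambda>h. HmH t e1 e2 $ j \<bullet> h)) (at 0)"
  using exhaust_4[of j]
  apply (elim disjE)
     apply (simp_all only: GH_def HmH_def v4)
     apply (rule has_derivative_eq_rhs, (auto intro!: derivative_eq_intros)[1], simp add: inner_vec_def sum_4 v4 algebra_simps)+
  done

lemma zero_S4: "0 \<in> S4" by (simp add: S4_def)

lemma hessL: "\<bar>e1\<bar> = 1 \<Longrightarrow> hessian (Lfun R1 R2 \<circ> chart_inv e1 e2) 0 = (\<chi> i j. HmL R1 R2 e2 $ j $ i)"
  by (rule hessian_eq[OF open_S4 zero_S4 L_grad GL_d2])

lemma hessH: "\<bar>e1\<bar> = 1 \<Longrightarrow> hessian (Hfun t \<circ> chart_inv e1 e2) 0 = (\<chi> i j. HmH t e1 e2 $ j $ i)"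
  by (rule hessian_eq[OF open_S4 zero_S4 H_grad GH_d2])

definition kJ :: "real \<Rightarrow> real \<Rightarrow> real \<Rightarrow> real \<Rightarrow> real^4^4" where
  "kJ a b c d = vector [vector [0,-a,0,-b], vector [a,0,b,0], vector [0,-c,0,-d], vector [c,0,d,0]]"

definition kI :: "real \<Rightarrow> real \<Rightarrow> real \<Rightarrow> real \<Rightarrow> real^4^4" where
  "kI a b c d = vector [vector [a,0,b,0], vector [0,a,0,b], vector [c,0,d,0], vector [0,c,0,d]]"

lemmas msimps = vec_eq_iff forall_4 matrix_matrix_mult_def sum_4 v4 kJ_def kI_def mat_def

lemma kJ_kJ: "kJ a b c d ** kJ a' b' c' d' = kI (-(a*a'+b*c')) (-(a*b'+b*d')) (-(c*a'+d*c')) (-(c*b'+d*d'))"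
  by (simp add: msimps algebra_simps)

lemma kJ_kI: "kJ a b c d ** kI a' b' c' d' = kJ (a*a'+b*c') (a*b'+b*d') (c*a'+d*c') (c*b'+d*d')"
  by (simp add: msimps algebra_simps)

lemma kI_kJ: "kI a b c d ** kJ a' b' c' d' = kJ (a*a'+b*c') (a*b'+b*d') (c*a'+d*c') (c*b'+d*d')"
  by (simp add: msimps algebra_simps)

lemma kI_kI: "kI a b c d ** kI a' b' c' d' = kI (a*a'+b*c') (a*b'+b*d') (c*a'+d*c') (c*b'+d*d')"
  by (simp add: msimps algebra_simps)

lemma kI_one: "kI 1 0 0 1 = mat 1"
  by (simp add: msimps)

lemma matrix_inv_eq:
  fixes A B :: "real^4^4"
  assumes "A ** B = mat 1" "B ** A = mat 1"
  shows "matrix_inv A = B"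
  unfolding matrix_inv_def
proof (rule some_equality)
  show "A ** B = mat 1 \<and> B ** A = mat 1" using assms by simp
  fix C assume "A ** C = mat 1 \<and> C ** A = mat 1"
  then have "C = C ** (A ** B)" "C ** A = mat 1" using assms by simp_all
  then show "C = B" by (simp add: matrix_mul_assoc)
qed

lemma chart_pole: "chart (pole e1 e2) = 0"
  by (simp add: chart_def pole_def vec_eq_iff forall_4 v4)

lemma Omega0: "Omega R1 R2 e2 0 = kJ R1 0 0 (e2*R2)"
  by (simp add: Omega_def msimps Let_def)

lemma inv_Omega0:
  assumes "R1 \<noteq> 0" "R2 \<noteq> 0" "\<bar>e2\<bar> = 1"
  shows "matrix_inv (Omega R1 R2 e2 0) = kJ (-1/R1) 0 0 (-e2/R2)"
proof -
  have e: "e2 * e2 = 1" using assms(3) by (metis abs_mult_self_eq mult.commute abs_mult abs_1 mult_1_right abs_eq_mult abs_mult_self_eq mult_cancel_right1 abs_of_nonneg zero_le_square) 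
  show ?thesis unfolding Omega0
    by (rule matrix_inv_eq) (use assms e in \<open>simp_all add: kJ_kJ kI_one[symmetric] field_simps\<close>)
qed

lemma hessL_kI: "(\<chi> i j. HmL R1 R2 e2 $ j $ i) = kI (-R1) 0 0 (-e2*R2)"
  by (simp add: msimps HmL_def)

lemma hessH_kI: "(\<chi> i j. HmH t e1 e2 $ j $ i) = kI (-(1-t) - t*e1*e2) t t (-t*e1*e2)"
  by (simp add: msimps HmH_def)

lemma det_4:
  "det (A::'a::comm_ring_1^4^4) = A$1$1 * A$2$2 * A$3$3 * A$4$4 - A$1$1 * A$2$2 * A$3$4 * A$4$3 - A$1$1 * A$2$3 * A$3$2 * A$4$4 + A$1$1 * A$2$3 * A$3$4 * A$4$2 + A$1$1 * A$2$4 * A$3$2 * A$4$3 - A$1$1 * A$2$4 * A$3$3 * A$4$2 - A$1$2 * A$2$1 * A$3$3 * A$4$4 + A$1$2 * A$2$1 * A$3$4 * A$4$3 + A$1$2 * A$2$3 * A$3$1 * A$4$4 - A$1$2 * A$2$3 * A$3$4 * A$4$1 - A$1$2 * A$2$4 * A$3$1 * A$4$3 + A$1$2 * A$2$4 * A$3$3 * A$4$1 + A$1$3 * A$2$1 * A$3$2 * A$4$4 - A$1$3 * A$2$1 * A$3$4 * A$4$2 - A$1$3 * A$2$2 * A$3$1 * A$4$4 + A$1$3 * A$2$2 * A$3$4 * A$4$1 + A$1$3 * A$2$4 * A$3$1 * A$4$2 - A$1$3 * A$2$4 * A$3$2 * A$4$1 - A$1$4 * A$2$1 * A$3$2 * A$4$3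 + A$1$4 * A$2$1 * A$3$3 * A$4$2 + A$1$4 * A$2$2 * A$3$1 * A$4$3 - A$1$4 * A$2$2 * A$3$3 * A$4$1 - A$1$4 * A$2$3 * A$3$1 * A$4$2 + A$1$4 * A$2$3 * A$3$2 * A$4$1"
proof -
  have f1: "finite {2::4, 3, 4}" "1 \<notin> {2::4, 3, 4}" by auto
  have f2: "finite {3::4, 4}" "2 \<notin> {3::4, 4}" by auto
  have f3: "finite {4::4}" "3 \<notin> {4::4}" by auto
  show ?thesis
    unfolding det_def UNIV_4
    unfolding sum_over_permutations_insert[OF f1]
    unfolding sum_over_permutations_insert[OF f2]
    unfolding sum_over_permutations_insert[OF f3]
    unfolding permutes_sing
    by (simp add: sign_swap_id permutation_swap_id sign_compose permutation_compose sign_id swap_id_eq algebra_simps)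
qed

lemma charpoly_kJ:
  "det (cmat (kJ a b c d) - mat x) = x^4 + complex_of_real ((a+d)^2 - 2*(a*d-b*c)) * x^2 + complex_of_real ((a*d-b*c)^2)"
  by (simp add: det_4 cmat_def kJ_def v4 mat_def) (simp add: algebra_simps power2_eq_square power4_eq_xxxx)

lemma pairEE: "(x - Complex 0 a) * (x - Complex 0 (-a)) = x^2 + complex_of_real (a^2)"
  by (simp add: complex_eq_iff power2_eq_square algebra_simps)

lemma prod4_zero: "((a::complex) * b * c * d = 0) \<longleftrightarrow> a = 0 \<or> b = 0 \<or> c = 0 \<or> d = 0"
  by simp

lemma eig_EE:
  assumes "al + be = a + d" "al * be = a*d - b*c"
  shows "eigenvalues (kJ a b c d) = {Complex 0 al, Complex 0 (-al), Complex 0 be, Complex 0 (-be)}"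
proof -
  have "det (cmat (kJ a b c d) - mat x) = ((x - Complex 0 al) * (x - Complex 0 (-al))) * ((x - Complex 0 be) * (x - Complex 0 (-be)))" for x
  proof -
    have "(a+d)^2 - 2*(a*d-b*c) = (al+be)^2 - 2*(al*be)" "(a*d-b*c)^2 = (al*be)^2"
      by (simp_all only: assms)
    then have "(a+d)^2 - 2*(a*d-b*c) = al^2 + be^2" "(a*d-b*c)^2 = al^2 * be^2"
      by (simp_all add: power2_eq_square algebra_simps)
    then show ?thesis unfolding charpoly_kJ pairEE
      by (simp add: algebra_simps power2_eq_square power4_eq_xxxx)
  qed
  then show ?thesis
    unfolding eigenvalues_def by (auto simp: mult.assoc[symmetric])
qed

lemma pairFF1: "(x - Complex al be) * (x - Complex (-al) (-be)) = x^2 - Complex (al^2 - be^2) (2*al*be)"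
  by (simp add: complex_eq_iff power2_eq_square algebra_simps)

lemma pairFF2: "(x - Complex al (-be)) * (x - Complex (-al) be) = x^2 - Complex (al^2 - be^2) (-(2*al*be))"
  by (simp add: complex_eq_iff power2_eq_square algebra_simps)

lemma conjpair: "(y - Complex p q) * (y - Complex p (-q)) = y^2 - complex_of_real (2*p) * y + complex_of_real (p^2 + q^2)"
  by (simp add: complex_eq_iff power2_eq_square algebra_simps)

lemma eig_FF:
  assumes "2*be = a + d" "al^2 + be^2 = a*d - b*c"
  shows "eigenvalues (kJ a b c d) = {Complex al be, Complex al (-be), Complex (-al) be, Complex (-al) (-be)}"
proof -
  have "det (cmat (kJ a b c d) - mat x) = ((x - Complex al be) * (x - Complex (-al) (-be))) * ((x - Complex al (-be)) * (x - Complex (-al) be))" for x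
  proof -
    have "(a+d)^2 - 2*(a*d-b*c) = (2*be)^2 - 2*(al^2 + be^2)" "(a*d-b*c)^2 = (al^2 + be^2)^2"
      by (simp_all only: assms)
    then have e: "(a+d)^2 - 2*(a*d-b*c) = - (2 * (al^2 - be^2))" "(a*d-b*c)^2 = (al^2 - be^2)^2 + (2*al*be)^2"
      by (simp_all add: power2_eq_square algebra_simps)
    have "((x - Complex al be) * (x - Complex (-al) (-be))) * ((x - Complex al (-be)) * (x - Complex (-al) be))
       = (x^2 - Complex (al^2 - be^2) (2*al*be)) * (x^2 - Complex (al^2 - be^2) (-(2*al*be)))"
      unfolding pairFF1 pairFF2 ..
    also have "\<dots> = (x^2)^2 - complex_of_real (2*(al^2 - be^2)) * x^2 + complex_of_real ((al^2 - be^2)^2 + (2*al*be)^2)"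
      by (rule conjpair)
    finally show ?thesis unfolding charpoly_kJ e
      by (simp add: algebra_simps power2_eq_square power4_eq_xxxx)
  qed
  then show ?thesis
    unfolding eigenvalues_def by (auto simp: mult.assoc[symmetric])
qed

lemma span2: "x \<in> span {a, b} \<longleftrightarrow> (\<exists>u v. x = u *\<^sub>R a + v *\<^sub>R b)"
proof -
  have "x \<in> span {a, b} \<longleftrightarrow> (\<exists>k. x - k *\<^sub>R a \<in> span {b})"
    by (rule span_breakdown_eq)
  also have "\<dots> \<longleftrightarrow> (\<exists>u v. x = u *\<^sub>R a + v *\<^sub>R b)"
  proof
    assume "\<exists>k. x - k *\<^sub>R a \<in> span {b}"
    then obtain k l where "x - k *\<^sub>R a = l *\<^sub>R b" by (auto simp: span_singleton)
    then have "x = k *\<^sub>R a + l *\<^sub>R b" by (metis add.commute diff_eq_eq)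
    then show "\<exists>u v. x = u *\<^sub>R a + v *\<^sub>R b" by blast
  next
    assume "\<exists>u v. x = u *\<^sub>R a + v *\<^sub>R b"
    then obtain u v where "x = u *\<^sub>R a + v *\<^sub>R b" by blast
    then have "x - u *\<^sub>R a = v *\<^sub>R b" by simp
    then show "\<exists>k. x - k *\<^sub>R a \<in> span {b}"
      by (intro exI[of _ u]) (simp add: span_singleton image_iff)
  qed
  finally show ?thesis .
qed

lemma subspace_sp: "subspace (sp_alg Om)"
proof -
  have sc: "transpose (c *\<^sub>R x) ** Om + Om ** (c *\<^sub>R x) = c *\<^sub>R (transpose x ** Om + Om ** x)" for c :: real and x :: "real^4^4"
    by (simp add: transpose_scalar matrix_scalar_ac scalar_matrix_assoc[symmetric] scaleR_add_right)
  show ?thesis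
    unfolding subspace_def sp_alg_def
    apply (intro conjI ballI allI)
      apply (simp add: vec_eq_iff matrix_matrix_mult_def transpose_def)
     apply (auto simp: vec_eq_iff matrix_matrix_mult_def transpose_def sum.distrib algebra_simps)[1]
    apply (simp add: sc)
    done
qed

lemma kJ_lin: "u *\<^sub>R kJ 1 0 0 1 + v *\<^sub>R kJ m11 m12 m21 m22 = kJ (u + v * m11) (v * m12) (v * m21) (u + v * m22)"
  by (simp add: msimps)

lemma bracket_kJ: "bracket (kJ a b c d) (kJ a' b' c' d') = kI (c * b' - b * c') (a' * b + b' * d - a * b' - b * d') (a * c' + c * d' - c * a' - d * c') (b * c' - c * b')"
  unfolding bracket_def kJ_kJ by (simp add: msimps algebra_simps)

lemma kI_zero: "kI 0 0 0 0 = 0"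
  by (simp add: msimps)

lemma sp_kJ: "w1*m12 = w2*m21 \<Longrightarrow> kJ m11 m12 m21 m22 \<in> sp_alg (kJ w1 0 0 w2)"
  unfolding sp_alg_def by (simp add: msimps transpose_def algebra_simps)

lemma comm_span:
  assumes "X \<in> span {kJ 1 0 0 1, kJ m11 m12 m21 m22}" "Y \<in> span {kJ 1 0 0 1, kJ m11 m12 m21 m22}"
  shows "bracket X Y = 0"
proof -
  obtain u v u' v' where "X = kJ (u + v * m11) (v * m12) (v * m21) (u + v * m22)" "Y = kJ (u' + v' * m11) (v' * m12) (v' * m21) (u' + v' * m22)"
    using assms unfolding span2 kJ_lin by blast
  then show ?thesis
    by (simp add: bracket_kJ kI_zero[symmetric] algebra_simps)
qed

lemma X_struct:
  fixes X :: "real^4^4"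
  assumes "bracket X (kJ 1 0 0 1) = kJ c11 c12 c21 c22"
  shows "X = kI (X$1$1) (X$1$3) (X$3$1) (X$3$3) + kJ (X$2$1) (X$2$3) (X$4$1) (X$4$3)"
  using assms unfolding bracket_def
  apply (simp add: msimps)
  done


lemma transpose_add4: "transpose (A + B :: real^4^4) = transpose A + transpose B"
  by (simp add: vec_eq_iff transpose_def)

lemma matrix_add_rdistrib4: "((A + B :: real^4^4) ** C) = A ** C + B ** C"
  by (simp add: vec_eq_iff matrix_matrix_mult_def sum.distrib algebra_simps)

lemma matrix_diff_rdistrib4: "((A - B :: real^4^4) ** C) = A ** C - B ** C"
  by (simp add: vec_eq_iff matrix_matrix_mult_def sum_subtractf algebra_simps)

lemma matrix_diff_ldistrib4: "(C ** (A - B :: real^4^4)) = C ** A - C ** B"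
  by (simp add: vec_eq_iff matrix_matrix_mult_def sum_subtractf algebra_simps)

lemma transpose_kI: "transpose (kI a b c d) = kI a c b d"
  by (simp add: msimps transpose_def)

lemma transpose_kJ: "transpose (kJ a b c d) = kJ (-a) (-c) (-b) (-d)"
  by (simp add: msimps transpose_def)

lemmas kprods = kJ_kJ kJ_kI kI_kJ kI_kI

lemma ND_arith:
  fixes w1 w2 m11 m12 m21 m22 p q a b :: real
  assumes "w1 \<noteq> 0" "w2 \<noteq> 0" "w1*m12 = w2*m21" "(m11 - m22)^2 + 4*m12*m21 \<noteq> 0"
    "w1*p + w2*q = 0" "p*m21 - m12*q = a + b*m11" "p*(m22 - m11) = b*m12"
    "q*(m11 - m22) = b*m21" "q*m12 - m21*p = a + b*m22"
  shows "p = 0"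
proof -
  let ?d = "m11 - m22"
  have e14: "2*(p*m21 - q*m12) = b*?d" using assms(6,9) by (simp add: algebra_simps)
  show ?thesis
  proof (cases "?d = 0")
    case False
    have "b*(2*(p*m21 - q*m12)) = b*b*?d" using e14 by simp
    then have "4*p*q*?d = b*b*?d" using assms(7,8) by algebra
    then have bb: "b*b = 4*p*q" using False by simp
    have "(b*m12)*(b*m21) = -(p*q*?d*?d)" using assms(7,8) by algebra
    then have "p*q*(?d^2 + 4*m12*m21) = 0" using bb by algebra
    then have "p*q = 0" using assms(4) by simp
    moreover have "q = -(w1*p)/w2" using assms(2,5) by (simp add: field_simps)
    ultimately have "w1*p*p = 0" using assms(2) by (simp add: field_simps)
    then show ?thesis using assms(1) by simp
  next
    case True
    then have "4*m12*m21 \<noteq> 0" using assms(4) by simp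
    then have m12: "m12 \<noteq> 0" by auto
    have "p*m21 = q*m12" using e14 True by simp
    then have "w2*p*m21 = w2*q*m12" by simp
    also have "w2*q = -(w1*p)" using assms(5) by simp
    finally have "p*(w2*m21 + w1*m12) = 0" by algebra
    then have "p*(2*w1*m12) = 0" using assms(3) by algebra
    then show ?thesis using assms(1) m12 by simp
  qed
qed
lemma comm_arith:
  fixes m11 m12 m21 m22 r11 r12 r21 r22 :: real
  assumes "(m11 - m22)^2 + 4*m12*m21 \<noteq> 0"
    "r12*m21 = m12*r21" "r11*m12 + r12*m22 = m11*r12 + m12*r22" "r21*m11 + r22*m21 = m21*r11 + m22*r21"
  shows "\<exists>al be. r11 = al + be*m11 \<and> r12 = be*m12 \<and> r21 = be*m21 \<and> r22 = al + be*m22"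
proof (cases "m12 = 0")
  case False
  define be where "be = r12/m12"
  define al where "al = r11 - be*m11"
  have 1: "r12 = be*m12" using False by (simp add: be_def)
  have "m12*r21 = m12*(be*m21)" using assms(2) 1 by algebra
  then have 2: "r21 = be*m21" using False by simp
  have "m12*r22 = m12*(al + be*m22)" using assms(3) 1 unfolding al_def by algebra
  then have 3: "r22 = al + be*m22" using False by simp
  show ?thesis by (intro exI[of _ al] exI[of _ be]) (simp add: al_def 1 2 3)
next
  case m12: True
  show ?thesis
  proof (cases "m21 = 0")
    case False
    define be where "be = r21/m21"
    define al where "al = r11 - be*m11"
    have 2: "r21 = be*m21" using False by (simp add: be_def)
    have "m21*r12 = m21*(be*m12)" using assms(2) 2 m12 by (simp add: mult.commute)
    then have 1: "r12 = be*m12" using False by simp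
    have "m21*r22 = m21*(al + be*m22)" using assms(4) 2 unfolding al_def by algebra
    then have 3: "r22 = al + be*m22" using False by simp
    show ?thesis by (intro exI[of _ al] exI[of _ be]) (simp add: al_def 1 2 3)
  next
    case m21: True
    then have d: "m11 - m22 \<noteq> 0" using assms(1) m12 by auto
    have "r12*(m11 - m22) = 0" using assms(3) m12 by algebra
    then have 1: "r12 = 0" using d by simp
    have "r21*(m11 - m22) = 0" using assms(4) m21 by algebra
    then have 2: "r21 = 0" using d by simp
    define be where "be = (r11 - r22)/(m11 - m22)"
    define al where "al = r11 - be*m11"
    have h: "be*(m11 - m22) = r11 - r22" using d by (simp add: be_def)
    have "r22 = al + be*m22" using h unfolding al_def by algebra
    then show ?thesis using 1 2 m12 m21 by (intro exI[of _ al] exI[of _ be]) (simp add: al_def)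
  qed
qed

lemma kIJ_eq_iff: "kJ a b c d + kI e f g h = kJ a' b' c' d' + kI e' f' g' h' \<longleftrightarrow> (a=a' \<and> b=b' \<and> c=c' \<and> d=d' \<and> e=e' \<and> f=f' \<and> g=g' \<and> h=h')"
  by (simp add: msimps) (auto; linarith)

lemma kIJ_diff: "(kJ a b c d + kI e f g h) - (kJ a' b' c' d' + kI e' f' g' h') = kJ (a-a') (b-b') (c-c') (d-d') + kI (e-e') (f-f') (g-g') (h-h')"
  by (simp add: msimps)

lemma kJ_lin2: "u *\<^sub>R kJ 1 0 0 1 + v *\<^sub>R kJ m11 m12 m21 m22 = kJ (u + v * m11) (v * m12) (v * m21) (u + v * m22) + kI 0 0 0 0"
  by (simp add: msimps)

lemma br_cond:
  assumes "bracket (kI p11 p12 p21 p22 + kJ r11 r12 r21 r22) (kJ m11 m12 m21 m22) = a *\<^sub>R kJ 1 0 0 1 + b *\<^sub>R kJ m11 m12 m21 m22"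
  shows "r12*m21 = m12*r21 \<and> r11*m12 + r12*m22 = m11*r12 + m12*r22 \<and> r21*m11 + r22*m21 = m21*r11 + m22*r21
    \<and> p12*m21 - m12*p21 = a + b*m11 \<and> p11*m12 + p12*m22 - (m11*p12 + m12*p22) = b*m12
    \<and> p21*m11 + p22*m21 - (m21*p11 + m22*p21) = b*m21 \<and> p21*m12 - m21*p12 = a + b*m22
    \<and> p11*m11 + p12*m21 - (m11*p11 + m12*p21) = a + b*m11 \<and> p21*m12 + p22*m22 - (m21*p12 + m22*p22) = a + b*m22"
proof -
  have "(kI p11 p12 p21 p22 ** kJ m11 m12 m21 m22 + kJ r11 r12 r21 r22 ** kJ m11 m12 m21 m22)
      - (kJ m11 m12 m21 m22 ** kI p11 p12 p21 p22 + kJ m11 m12 m21 m22 ** kJ r11 r12 r21 r22)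
      = a *\<^sub>R kJ 1 0 0 1 + b *\<^sub>R kJ m11 m12 m21 m22"
    using assms unfolding bracket_def by (simp only: matrix_add_rdistrib4 matrix_add_ldistrib)
  then have "(kJ (p11*m11+p12*m21) (p11*m12+p12*m22) (p21*m11+p22*m21) (p21*m12+p22*m22) + kI (-(r11*m11+r12*m21)) (-(r11*m12+r12*m22)) (-(r21*m11+r22*m21)) (-(r21*m12+r22*m22)))
      - (kJ (m11*p11+m12*p21) (m11*p12+m12*p22) (m21*p11+m22*p21) (m21*p12+m22*p22) + kI (-(m11*r11+m12*r21)) (-(m11*r12+m12*r22)) (-(m21*r11+m22*r21)) (-(m21*r12+m22*r22)))
      = kJ (a + b * m11) (b * m12) (b * m21) (a + b * m22) + kI 0 0 0 0"
    by (simp only: kprods kJ_lin2 add.commute[of "kI _ _ _ _" "kJ _ _ _ _"])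
  then have E: "(p11*m11+p12*m21) - (m11*p11+m12*p21) = a + b * m11 \<and> (p11*m12+p12*m22) - (m11*p12+m12*p22) = b * m12
     \<and> (p21*m11+p22*m21) - (m21*p11+m22*p21) = b * m21 \<and> (p21*m12+p22*m22) - (m21*p12+m22*p22) = a + b * m22
     \<and> -(r11*m11+r12*m21) - (-(m11*r11+m12*r21)) = 0 \<and> -(r11*m12+r12*m22) - (-(m11*r12+m12*r22)) = 0
     \<and> -(r21*m11+r22*m21) - (-(m21*r11+m22*r21)) = 0 \<and> -(r21*m12+r22*m22) - (-(m21*r12+m22*r22)) = 0"
    by (simp only: kIJ_diff kIJ_eq_iff)
  then show ?thesis
    by (elim conjE, intro conjI; algebra)
qed

lemma sp_cond:
  assumes "kI p11 p12 p21 p22 + kJ r11 r12 r21 r22 \<in> sp_alg (kJ w1 0 0 w2)"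
  shows "w1*p11 = 0 \<and> w2*p22 = 0 \<and> w1*p12 + w2*p21 = 0 \<and> w1*r12 = w2*r21"
  using assms unfolding sp_alg_def
  apply (simp only: mem_Collect_eq transpose_add4 transpose_kI transpose_kJ matrix_add_rdistrib4 matrix_add_ldistrib kprods)
  apply (simp add: msimps)
  apply (elim conjE)
  apply (intro conjI)
     apply blast
    apply blast
   apply (metis add.commute mult.commute)
  apply (metis mult.commute)
  done


lemma norm_sub:
  fixes X :: "real^4^4"
  assumes w: "w1 \<noteq> 0" "w2 \<noteq> 0" "w1*m12 = w2*m21" and disc: "(m11 - m22)^2 + 4*m12*m21 \<noteq> 0"
    and X: "X \<in> sp_alg (kJ w1 0 0 w2)"
    and b1: "bracket X (kJ 1 0 0 1) \<in> span {kJ 1 0 0 1, kJ m11 m12 m21 m22}"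
    and b2: "bracket X (kJ m11 m12 m21 m22) \<in> span {kJ 1 0 0 1, kJ m11 m12 m21 m22}"
  shows "X \<in> span {kJ 1 0 0 1, kJ m11 m12 m21 m22}"
proof -
  from b1 obtain u v where "bracket X (kJ 1 0 0 1) = u *\<^sub>R kJ 1 0 0 1 + v *\<^sub>R kJ m11 m12 m21 m22"
    unfolding span2 by blast
  then have "bracket X (kJ 1 0 0 1) = kJ (u + v * m11) (v * m12) (v * m21) (u + v * m22)"
    by (simp add: kJ_lin)
  then have "X = kI (X$1$1) (X$1$3) (X$3$1) (X$3$3) + kJ (X$2$1) (X$2$3) (X$4$1) (X$4$3)"
    by (rule X_struct)
  then obtain p11 p12 p21 p22 r11 r12 r21 r22 where Xe: "X = kI p11 p12 p21 p22 + kJ r11 r12 r21 r22"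
    by blast
  have sp: "w1*p11 = 0 \<and> w2*p22 = 0 \<and> w1*p12 + w2*p21 = 0 \<and> w1*r12 = w2*r21"
    using X unfolding Xe by (rule sp_cond)
  from b2 obtain a b where "bracket X (kJ m11 m12 m21 m22) = a *\<^sub>R kJ 1 0 0 1 + b *\<^sub>R kJ m11 m12 m21 m22"
    unfolding span2 by blast
  then have br: "r12*m21 = m12*r21 \<and> r11*m12 + r12*m22 = m11*r12 + m12*r22 \<and> r21*m11 + r22*m21 = m21*r11 + m22*r21
    \<and> p12*m21 - m12*p21 = a + b*m11 \<and> p11*m12 + p12*m22 - (m11*p12 + m12*p22) = b*m12
    \<and> p21*m11 + p22*m21 - (m21*p11 + m22*p21) = b*m21 \<and> p21*m12 - m21*p12 = a + b*m22
    \<and> p11*m11 + p12*m21 - (m11*p11 + m12*p21) = a + b*m11 \<and> p21*m12 + p22*m22 - (m21*p12 + m22*p22) = a + b*m22"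
    unfolding Xe by (rule br_cond)
  have p11: "p11 = 0" and p22: "p22 = 0" using sp w by auto
  have c1a: "r12*m21 = m12*r21" using br by (elim conjE) assumption
  have c1b: "r11*m12 + r12*m22 = m11*r12 + m12*r22" using br by (elim conjE) assumption
  have c1c: "r21*m11 + r22*m21 = m21*r11 + m22*r21" using br by (elim conjE) assumption
  have c4: "p12*m21 - m12*p21 = a + b*m11" using br by (elim conjE) assumption
  have c5: "p11*m12 + p12*m22 - (m11*p12 + m12*p22) = b*m12" using br by (elim conjE) assumption
  have c6: "p21*m11 + p22*m21 - (m21*p11 + m22*p21) = b*m21" using br by (elim conjE) assumption
  have c7: "p21*m12 - m21*p12 = a + b*m22" using br by (elim conjE) assumption
  have e5: "p12*(m22 - m11) = b*m12" using c5 p11 p22 by (simp add: algebra_simps)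
  have e6: "p21*(m11 - m22) = b*m21" using c6 p11 p22 by (simp add: algebra_simps)
  have sp3: "w1*p12 + w2*p21 = 0" using sp by (elim conjE) assumption
  have p12: "p12 = 0"
    by (rule ND_arith[OF w disc sp3 c4 e5 e6 c7])
  then have p21: "p21 = 0" using sp3 w by simp
  obtain al be where R: "r11 = al + be*m11" "r12 = be*m12" "r21 = be*m21" "r22 = al + be*m22"
    using comm_arith[OF disc c1a c1b c1c] by (elim exE conjE)
  have "X = al *\<^sub>R kJ 1 0 0 1 + be *\<^sub>R kJ m11 m12 m21 m22"
    unfolding Xe kJ_lin p11 p12 p21 p22 R kI_zero by simp
  then show ?thesis unfolding span2 by blast
qed



lemma cartan_gen:
  assumes w: "w1 \<noteq> 0" "w2 \<noteq> 0" "w1*m12 = w2*m21" and disc: "(m11 - m22)^2 + 4*m12*m21 \<noteq> 0"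
  shows "cartan_subalgebra (sp_alg (kJ w1 0 0 w2)) (span {kJ 1 0 0 1, kJ m11 m12 m21 m22})"
proof -
  let ?h = "span {kJ 1 0 0 1, kJ m11 m12 m21 m22}"
  let ?g = "sp_alg (kJ w1 0 0 w2)"
  have hg: "?h \<subseteq> ?g"
    by (rule span_minimal[OF _ subspace_sp]) (use w in \<open>auto intro!: sp_kJ\<close>)
  have br0: "X \<in> ?h \<Longrightarrow> Y \<in> ?h \<Longrightarrow> bracket X Y = 0" for X Y
    by (rule comm_span)
  have lie: "lie_subalgebra ?g ?h"
    unfolding lie_subalgebra_def using hg br0 span_zero by auto
  have z: "(0::real^4^4) \<in> ?h" by (rule span_zero)
  have "{bracket X Y |X Y. X \<in> ?h \<and> Y \<in> lower_central ?h 0} = {0}"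
  proof
    show "{bracket X Y |X Y. X \<in> ?h \<and> Y \<in> lower_central ?h 0} \<subseteq> {0}" using br0 by auto
    show "{0} \<subseteq> {bracket X Y |X Y. X \<in> ?h \<and> Y \<in> lower_central ?h 0}"
      using br0[OF z z] z by force
  qed
  then have "lower_central ?h (Suc 0) = {0}" by simp
  then have nil: "lie_nilpotent ?h" unfolding lie_nilpotent_def by blast
  have "normalizer ?g ?h = ?h"
  proof
    show "normalizer ?g ?h \<subseteq> ?h"
    proof
      fix X assume "X \<in> normalizer ?g ?h"
      then have "X \<in> ?g" "bracket X (kJ 1 0 0 1) \<in> ?h" "bracket X (kJ m11 m12 m21 m22) \<in> ?h"
        unfolding normalizer_def by (auto intro: span_base)
      then show "X \<in> ?h" by (rule norm_sub[OF w disc])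
    qed
    show "?h \<subseteq> normalizer ?g ?h"
      unfolding normalizer_def using hg br0 span_zero by auto
  qed
  then show ?thesis unfolding cartan_subalgebra_def using lie nil by blast
qed

lemma kJ_diff: "kJ a b c d - kJ a' b' c' d' = kJ (a-a') (b-b') (c-c') (d-d')"
  by (simp add: msimps)

lemma kJ_add: "kJ a b c d + kJ a' b' c' d' = kJ (a+a') (b+b') (c+c') (d+d')"
  by (simp add: msimps)

lemma kJ_eq_iff: "kJ a b c d = kJ a' b' c' d' \<longleftrightarrow> (a=a' \<and> b=b' \<and> c=c' \<and> d=d')"
  by (simp add: msimps) (auto; linarith)

lemma kI_neq_kJ: "b \<noteq> 0 \<Longrightarrow> kI a b c d \<noteq> kJ a' b' c' d'"
  by (simp add: msimps)

lemma bracket_kIkJ: "bracket (kI a b c d) (kJ a' b' c' d') =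
   kJ (a*a'+b*c' - (a'*a+b'*c)) (a*b'+b*d' - (a'*b+b'*d)) (c*a'+d*c' - (c'*a+d'*c)) (c*b'+d*d' - (c'*b+d'*d))"
  unfolding bracket_def kI_kJ kJ_kI kJ_diff ..

lemma not_cartan_gen:
  assumes w: "w1 \<noteq> 0" "w2 \<noteq> 0" "w1*m12 = w2*m21" and disc: "(m11 - m22)^2 + 4*m12*m21 = 0"
    and m12: "m12 \<noteq> 0"
  shows "\<not> cartan_subalgebra (sp_alg (kJ w1 0 0 w2)) (span {kJ 1 0 0 1, kJ m11 m12 m21 m22})"
proof
  let ?h = "span {kJ 1 0 0 1, kJ m11 m12 m21 m22}"
  let ?g = "sp_alg (kJ w1 0 0 w2)"
  assume cart: "cartan_subalgebra ?g ?h"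
  define q where "q = -w1/w2"
  define X where "X = kI 0 1 q 0"
  have qm: "q*m12 = -m21" using w unfolding q_def by (simp add: field_simps)
  have wq: "w1 + w2*q = 0" using w unfolding q_def by (simp add: field_simps)
  have Xg: "X \<in> ?g"
    unfolding sp_alg_def X_def mem_Collect_eq transpose_kI kprods kJ_add
    using wq by (simp add: msimps algebra_simps)
  define b where "b = (m22 - m11)/m12"
  define a where "a = m21 - q*m12 - b*m11"
  have bm12: "b*m12 = m22 - m11" using m12 unfolding b_def by simp
  have bm21: "b*m21 = q*(m11 - m22)"
  proof -
    have "m12*(b*m21) = m12*(q*(m11 - m22))" using bm12 qm by algebra
    then show ?thesis using m12 by simp
  qed
  have a22: "a + b*m22 = q*m12 - m21"
  proof -
    have "m12*(a + b*m22) = m12*(q*m12 - m21)"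
      unfolding a_def using bm12 qm disc by algebra
    then show ?thesis using m12 by simp
  qed
  have "bracket X Y \<in> ?h" if Y: "Y \<in> ?h" for Y
  proof -
    obtain u v where Yeq: "Y = kJ (u + v * m11) (v * m12) (v * m21) (u + v * m22)"
      using Y unfolding span2 kJ_lin by blast
    have f1: "v * (m21 - q*m12) = v * a + v * b*m11" unfolding a_def by algebra
    have f2: "v * (m22 - m11) = v * b*m12" using bm12 by algebra
    have f3: "v * (q*(m11-m22)) = v * b*m21" using bm21 by algebra
    have f4: "v * (q*m12 - m21) = v * a + v * b*m22" using a22 by algebra
    have "bracket X Y = kJ (v * (m21 - q*m12)) (v * (m22 - m11)) (v * (q*(m11-m22))) (v * (q*m12 - m21))"
      unfolding Yeq X_def bracket_kIkJ kJ_eq_iff by (simp add: algebra_simps)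
    also have "\<dots> = kJ (v * a + v * b*m11) (v * b*m12) (v * b*m21) (v * a + v * b*m22)"
      by (simp only: f1 f2 f3 f4)
    also have "\<dots> = (v * a) *\<^sub>R kJ 1 0 0 1 + (v * b) *\<^sub>R kJ m11 m12 m21 m22"
      unfolding kJ_lin by (simp add: algebra_simps)
    finally show ?thesis unfolding span2 by blast
  qed
  then have "X \<in> normalizer ?g ?h" unfolding normalizer_def using Xg by blast
  moreover have "X \<notin> ?h"
    unfolding span2 kJ_lin X_def using kI_neq_kJ[of 1] by auto
  ultimately show False using cart unfolding cartan_subalgebra_def by blast
qed



lemma ln_abs_eq: "ln \<bar>x::real\<bar> = ln (x*x) / 2"
proof (cases "x = 0")
  case True then show ?thesis by simp
next
  case False
  have "ln \<bar>x\<bar> = ln x" using False by (simp add: ln_real_def)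
  moreover have "ln (x*x) = ln x + ln x" using False by (simp add: ln_mult)
  ultimately show ?thesis by simp
qed

lemma no_fixed_curve:
  fixes f :: "pt \<Rightarrow> real" and \<gamma> :: "real \<Rightarrow> pt"
  assumes df: "(f has_derivative (\<lambda>_. 0)) (at p within Mspace)"
    and dg0: "\<gamma> differentiable (at 0)" and inM: "\<And>s. \<gamma> s \<in> Mspace" and g0: "\<gamma> 0 = p"
    and dfg: "((\<lambda>s. f (\<gamma> s)) has_real_derivative D) (at 0)" and D: "D \<noteq> 0"
  shows False
proof -
  obtain \<gamma>' where dg: "(\<gamma> has_derivative \<gamma>') (at 0)" using dg0 unfolding differentiable_def by blast
  have "range \<gamma> \<subseteq> Mspace" using inM by auto
  from has_derivative_subset[OF df this] g0
  have "(f has_derivative (\<lambda>_. 0)) (at (\<gamma> 0) within range \<gamma>)" by simp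
  from diff_chain_within[OF dg this]
  have "((f \<circ> \<gamma>) has_derivative (\<lambda>_. 0)) (at 0)" by (simp add: o_def)
  moreover have "((f \<circ> \<gamma>) has_derivative (\<lambda>x. D * x)) (at 0)"
    using dfg by (simp add: has_field_derivative_def o_def)
  ultimately have "(\<lambda>_::real. 0::real) = (\<lambda>x. D * x)" by (rule has_derivative_unique)
  then have "0 = D * 1" by (metis (no_types))
  with D show False by simp
qed

lemma rot_sq: "(x * cos s - z * sin s)^2 + (x * sin s + z * cos s)^2 = x^2 + (z::real)^2"
  using sin_cos_squared_add3[of s] by algebra

lemma fixed_is_pole:
  assumes "is_fixed_point R1 R2 t p" "R1 \<noteq> 0" "R2 \<noteq> 0"
  shows "\<exists>e1 e2. (e1 = 1 \<or> e1 = -1) \<and> (e2 = 1 \<or> e2 = -1) \<and> p = pole e1 e2"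
proof -
  obtain x1 y1 z1 x2 y2 z2 where p: "p = ((x1,y1,z1),(x2,y2,z2))" by (metis prod.collapse)
  have M: "p \<in> Mspace" and z1: "z1 \<noteq> 0" and dL: "(Lfun R1 R2 has_derivative (\<lambda>_. 0)) (at p within Mspace)"
    using assms unfolding is_fixed_point_def p by (auto simp: z1_of_def)
  have s1: "x1^2 + y1^2 + z1^2 = 1" and s2: "x2^2 + y2^2 + z2^2 = 1"
    using M unfolding p Mspace_def S2_def by auto
  have Lrw: "Lfun R1 R2 ((a,b,c),(d,e,f)) = R1 * (ln (c*c) / 2) + R2 * f" for a b c d e f
    by (simp add: Lfun_def ln_abs_eq)
  have pos: "0 < z1 * z1" using z1 by (cases "z1 > 0") (auto simp: mult_neg_neg)
  have x10: "x1 = 0"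
  proof (rule ccontr)
    assume nz: "x1 \<noteq> 0"
    show False
    proof (rule no_fixed_curve[OF dL])
      show "(\<lambda>s. ((x1 * cos s - z1 * sin s, y1, x1 * sin s + z1 * cos s),(x2,y2,z2))) differentiable (at 0)"
        unfolding differentiable_def by (rule exI) (rule derivative_intros)+
      show "((x1 * cos s - z1 * sin s, y1, x1 * sin s + z1 * cos s),(x2,y2,z2)) \<in> Mspace" for s
        using s1 s2 rot_sq[of x1 s z1] unfolding Mspace_def S2_def by (auto simp: algebra_simps)
      show "((x1 * cos 0 - z1 * sin 0, y1, x1 * sin 0 + z1 * cos 0),(x2,y2,z2)) = p" by (simp add: p)
      show "((\<lambda>s. Lfun R1 R2 ((x1 * cos s - z1 * sin s, y1, x1 * sin s + z1 * cos s),(x2,y2,z2))) has_real_derivative R1 * x1 / z1) (at 0)"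
        unfolding Lrw
        apply (rule DERIV_cong)
         apply (rule derivative_eq_intros refl | simp add: pos)+
        done
      show "R1 * x1 / z1 \<noteq> 0" using assms nz z1 by simp
    qed
  qed
  have y10: "y1 = 0"
  proof (rule ccontr)
    assume nz: "y1 \<noteq> 0"
    show False
    proof (rule no_fixed_curve[OF dL])
      show "(\<lambda>s. ((x1, y1 * cos s - z1 * sin s, y1 * sin s + z1 * cos s),(x2,y2,z2))) differentiable (at 0)"
        unfolding differentiable_def by (rule exI) (rule derivative_intros)+
      show "((x1, y1 * cos s - z1 * sin s, y1 * sin s + z1 * cos s),(x2,y2,z2)) \<in> Mspace" for s
        using s1 s2 rot_sq[of y1 s z1] unfolding Mspace_def S2_def by (auto simp: algebra_simps)
      show "((x1, y1 * cos 0 - z1 * sin 0, y1 * sin 0 + z1 * cos 0),(x2,y2,z2)) = p" by (simp add: p)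
      show "((\<lambda>s. Lfun R1 R2 ((x1, y1 * cos s - z1 * sin s, y1 * sin s + z1 * cos s),(x2,y2,z2))) has_real_derivative R1 * y1 / z1) (at 0)"
        unfolding Lrw
        apply (rule DERIV_cong)
         apply (rule derivative_eq_intros refl | simp add: pos)+
        done
      show "R1 * y1 / z1 \<noteq> 0" using assms nz z1 by simp
    qed
  qed
  have x20: "x2 = 0"
  proof (rule ccontr)
    assume nz: "x2 \<noteq> 0"
    show False
    proof (rule no_fixed_curve[OF dL])
      show "(\<lambda>s. ((x1,y1,z1),(x2 * cos s - z2 * sin s, y2, x2 * sin s + z2 * cos s))) differentiable (at 0)"
        unfolding differentiable_def by (rule exI) (rule derivative_intros)+
      show "((x1,y1,z1),(x2 * cos s - z2 * sin s, y2, x2 * sin s + z2 * cos s)) \<in> Mspace" for s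
        using s1 s2 rot_sq[of x2 s z2] unfolding Mspace_def S2_def by (auto simp: algebra_simps)
      show "((x1,y1,z1),(x2 * cos 0 - z2 * sin 0, y2, x2 * sin 0 + z2 * cos 0)) = p" by (simp add: p)
      show "((\<lambda>s. Lfun R1 R2 ((x1,y1,z1),(x2 * cos s - z2 * sin s, y2, x2 * sin s + z2 * cos s))) has_real_derivative R2 * x2) (at 0)"
        unfolding Lrw
        apply (rule DERIV_cong)
         apply (rule derivative_eq_intros refl | simp add: pos)+
        done
      show "R2 * x2 \<noteq> 0" using assms nz  by simp
    qed
  qed
  have y20: "y2 = 0"
  proof (rule ccontr)
    assume nz: "y2 \<noteq> 0"
    show False
    proof (rule no_fixed_curve[OF dL])
      show "(\<lambda>s. ((x1,y1,z1),(x2, y2 * cos s - z2 * sin s, y2 * sin s + z2 * cos s))) differentiable (at 0)"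
        unfolding differentiable_def by (rule exI) (rule derivative_intros)+
      show "((x1,y1,z1),(x2, y2 * cos s - z2 * sin s, y2 * sin s + z2 * cos s)) \<in> Mspace" for s
        using s1 s2 rot_sq[of y2 s z2] unfolding Mspace_def S2_def by (auto simp: algebra_simps)
      show "((x1,y1,z1),(x2, y2 * cos 0 - z2 * sin 0, y2 * sin 0 + z2 * cos 0)) = p" by (simp add: p)
      show "((\<lambda>s. Lfun R1 R2 ((x1,y1,z1),(x2, y2 * cos s - z2 * sin s, y2 * sin s + z2 * cos s))) has_real_derivative R2 * y2) (at 0)"
        unfolding Lrw
        apply (rule DERIV_cong)
         apply (rule derivative_eq_intros refl | simp add: pos)+
        done
      show "R2 * y2 \<noteq> 0" using assms nz  by simp
    qed
  qed
  have "z1^2 = 1" "z2^2 = 1" using s1 s2 x10 y10 x20 y20 by auto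
  then have "(z1 = 1 \<or> z1 = -1)" "(z2 = 1 \<or> z2 = -1)" by (auto simp: power2_eq_1_iff)
  then show ?thesis using x10 y10 x20 y20 unfolding p pole_def by blast
qed
lemma sign_root:
  fixes c e :: real
  assumes e: "e = 1 \<or> e = -1" and d: "\<bar>c - e\<bar> < 1" and s: "a^2 + b^2 + c^2 = 1"
  shows "c = e * sqrt (1 - a^2 - b^2)" "c * c = 1 - a^2 - b^2"
proof -
  have cc: "1 - a^2 - b^2 = c^2" using s by simp
  have "sqrt (1 - a^2 - b^2) = \<bar>c\<bar>" unfolding cc by simp
  moreover have "\<bar>c\<bar> = e * c" using e d by auto
  ultimately show "c = e * sqrt (1 - a^2 - b^2)" using e by auto
  show "c * c = 1 - a^2 - b^2" using cc by (simp add: power2_eq_square)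
qed

lemma dist_z1: "\<bar>snd (snd (fst q)) - snd (snd (fst p))\<bar> \<le> dist q (p::pt)"
proof -
  have "dist (snd (snd (fst q))) (snd (snd (fst p))) \<le> dist (snd (fst q)) (snd (fst p))" by (rule dist_snd_le)
  also have "\<dots> \<le> dist (fst q) (fst p)" by (rule dist_snd_le)
  also have "\<dots> \<le> dist q p" by (rule dist_fst_le)
  finally show ?thesis by (simp add: dist_real_def)
qed

lemma dist_z2: "\<bar>snd (snd (snd q)) - snd (snd (snd p))\<bar> \<le> dist q (p::pt)"
proof -
  have "dist (snd (snd (snd q))) (snd (snd (snd p))) \<le> dist (snd (snd q)) (snd (snd p))" by (rule dist_snd_le)
  also have "\<dots> \<le> dist (snd q) (snd p)" by (rule dist_snd_le)
  also have "\<dots> \<le> dist q p" by (rule dist_snd_le)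
  finally show ?thesis by (simp add: dist_real_def)
qed

definition FL :: "real \<Rightarrow> real \<Rightarrow> real \<Rightarrow> pt \<Rightarrow> real" where
  "FL R1 R2 e2 q = R1 * (ln (1 - (fst (fst q))^2 - (fst (snd (fst q)))^2) / 2)
     + R2 * (e2 * sqrt (1 - (fst (snd q))^2 - (fst (snd (snd q)))^2))"

definition FH :: "real \<Rightarrow> real \<Rightarrow> real \<Rightarrow> pt \<Rightarrow> real" where
  "FH t e1 e2 q = (1 - t) * (ln (1 - (fst (fst q))^2 - (fst (snd (fst q)))^2) / 2)
     + t * (fst (fst q) * fst (snd q) + fst (snd (fst q)) * fst (snd (snd q))
        + e1 * e2 * (sqrt (1 - (fst (fst q))^2 - (fst (snd (fst q)))^2) * sqrt (1 - (fst (snd q))^2 - (fst (snd (snd q)))^2)))"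

lemma agree:
  assumes e1: "e1 = 1 \<or> e1 = -1" and e2: "e2 = 1 \<or> e2 = -1" and q: "q \<in> Mspace" and d: "dist q (pole e1 e2) < 1"
  shows "Lfun R1 R2 q = FL R1 R2 e2 q" "Hfun t q = FH t e1 e2 q"
proof -
  obtain a b c d' e f where qe: "q = ((a,b,c),(d',e,f))" by (metis prod.collapse)
  have s1: "a^2 + b^2 + c^2 = 1" and s2: "d'^2 + e^2 + f^2 = 1" using q unfolding qe Mspace_def S2_def by auto
  have d1: "\<bar>c - e1\<bar> < 1" using dist_z1[of q "pole e1 e2"] d unfolding qe pole_def by simp
  have d2: "\<bar>f - e2\<bar> < 1" using dist_z2[of q "pole e1 e2"] d unfolding qe pole_def by simp
  note r1 = sign_root[OF e1 d1 s1] and r2 = sign_root[OF e2 d2 s2]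
  show "Lfun R1 R2 q = FL R1 R2 e2 q"
    unfolding qe Lfun_def FL_def using r1 r2 by (simp add: ln_abs_eq)
  show "Hfun t q = FH t e1 e2 q"
    unfolding qe Hfun_def FH_def using r1 r2 by (simp add: ln_abs_eq)
qed

lemma pole_fixed:
  assumes e1: "e1 = 1 \<or> e1 = -1" and e2: "e2 = 1 \<or> e2 = -1"
  shows "is_fixed_point R1 R2 t (pole e1 e2)"
proof -
  have pM: "pole e1 e2 \<in> Mspace" using e1 e2 unfolding pole_def Mspace_def S2_def by auto
  have dFL: "(FL R1 R2 e2 has_derivative (\<lambda>_. 0)) (at (pole e1 e2))"
    unfolding FL_def
    apply (rule has_derivative_eq_rhs)
     apply (rule derivative_eq_intros refl | simp add: pole_def)+
    done
  have dFH: "(FH t e1 e2 has_derivative (\<lambda>_. 0)) (at (pole e1 e2))"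
    unfolding FH_def
    apply (rule has_derivative_eq_rhs)
     apply (rule derivative_eq_intros refl | simp add: pole_def)+
    done
  have "(Lfun R1 R2 has_derivative (\<lambda>_. 0)) (at (pole e1 e2) within Mspace)"
    by (rule has_derivative_transform_within[OF has_derivative_at_withinI[OF dFL] zero_less_one pM])
       (use agree[OF e1 e2] in auto)
  moreover have "(Hfun t has_derivative (\<lambda>_. 0)) (at (pole e1 e2) within Mspace)"
    by (rule has_derivative_transform_within[OF has_derivative_at_withinI[OF dFH] zero_less_one pM])
       (use agree[OF e1 e2] in auto)
  moreover have "z1_of (pole e1 e2) \<noteq> 0" using e1 by (auto simp: z1_of_def pole_def)
  ultimately show ?thesis using pM unfolding is_fixed_point_def by blast
qed



lemma e_sq: "e = 1 \<or> e = -1 \<Longrightarrow> \<bar>e\<bar> = (1::real) \<and> e * e = 1"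
  by auto

lemma AL_pole:
  assumes "e1 = 1 \<or> e1 = -1" "e2 = 1 \<or> e2 = -1" "R1 \<noteq> 0" "R2 \<noteq> 0"
  shows "A_L R1 R2 e1 e2 (chart (pole e1 e2)) = kJ 1 0 0 1"
proof -
  have a1: "\<bar>e1\<bar> = 1" and a2: "\<bar>e2\<bar> = 1" "e2 * e2 = 1" using e_sq assms by blast+
  show ?thesis
    unfolding A_L_def chart_pole inv_Omega0[OF assms(3,4) a2(1)] hessL[OF a1] hessL_kI kJ_kI
    using assms(3,4) a2 by (simp add: kJ_eq_iff)
qed

lemma AH_pole:
  assumes "e1 = 1 \<or> e1 = -1" "e2 = 1 \<or> e2 = -1" "R1 \<noteq> 0" "R2 \<noteq> 0"
  shows "A_H R1 R2 t e1 e2 (chart (pole e1 e2)) = kJ ((1 - t + t * e1 * e2) / R1) (- t / R1) (- e2 * t / R2) (e1 * t / R2)"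
proof -
  have a1: "\<bar>e1\<bar> = 1" and a2: "\<bar>e2\<bar> = 1" "e2 * e2 = 1" using e_sq assms by blast+
  show ?thesis
    unfolding A_H_def chart_pole inv_Omega0[OF assms(3,4) a2(1)] hessH[OF a1] hessH_kI kJ_kI kJ_eq_iff
    using assms(3,4) a2 by (simp add: field_simps)
qed

lemma Omega_pole: "Omega R1 R2 e2 (chart (pole e1 e2)) = kJ R1 0 0 (e2 * R2)"
  by (simp add: chart_pole Omega0)

lemma EE_gen:
  assumes disc: "(m11 - m22)^2 + 4 * m12 * m21 > 0"
  shows "elliptic_elliptic (kJ 1 0 0 1) (kJ m11 m12 m21 m22)"
proof -
  define s where "s = sqrt ((m11 - m22)^2 + 4 * m12 * m21)"
  have s0: "s > 0" using disc unfolding s_def by simp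
  have ss: "s * s = (m11 - m22)^2 + 4 * m12 * m21" using disc unfolding s_def by simp
  define C where "C = \<bar>m11 + m22\<bar> + s + 1"
  define al where "al = C + (m11 + m22 - s) / 2"
  define be where "be = C + (m11 + m22 + s) / 2"
  have al0: "al > 0" unfolding al_def C_def
    using s0 by (cases "m11 + m22 \<ge> 0") (simp_all add: field_simps)
  have be0: "be > al" unfolding al_def be_def using s0 by simp
  have sum: "al + be = (C + 1 * m11) + (C + 1 * m22)" unfolding al_def be_def by (simp add: field_simps)
  have prod: "al * be = (C + 1 * m11) * (C + 1 * m22) - (1 * m12) * (1 * m21)"
  proof -
    have a2: "2 * al = 2 * C + m11 + m22 - s" and b2: "2 * be = 2 * C + m11 + m22 + s" unfolding al_def be_def by simp_all
    have "4 * (al * be) = (2 * al) * (2 * be)" by simp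
    also have "\<dots> = (2 * C + m11 + m22 - s) * (2 * C + m11 + m22 + s)" unfolding a2 b2 ..
    also have "\<dots> = (2 * C + m11 + m22) * (2 * C + m11 + m22) - s * s" by (simp add: algebra_simps)
    also have "\<dots> = 4 * ((C + 1 * m11) * (C + 1 * m22) - (1 * m12) * (1 * m21))"
      unfolding ss by (simp add: algebra_simps power2_eq_square)
    finally have "4 * (al * be) = 4 * ((C + 1 * m11) * (C + 1 * m22) - (1 * m12) * (1 * m21))" .
    then show ?thesis by simp
  qed
  have eig: "eigenvalues (C *\<^sub>R kJ 1 0 0 1 + 1 *\<^sub>R kJ m11 m12 m21 m22) =
     {Complex 0 al, Complex 0 (-al), Complex 0 be, Complex 0 (-be)}"
    unfolding kJ_lin by (rule eig_EE[OF sum prod])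
  have card: "card {Complex 0 al, Complex 0 (-al), Complex 0 be, Complex 0 (-be)} = 4"
    using al0 be0 by simp
  have all: "al \<noteq> 0 \<and> be \<noteq> 0 \<and> al \<noteq> be \<and> card {Complex 0 al, Complex 0 (-al), Complex 0 be, Complex 0 (-be)} = 4 \<and>
     eigenvalues (C *\<^sub>R kJ 1 0 0 1 + 1 *\<^sub>R kJ m11 m12 m21 m22) = {Complex 0 al, Complex 0 (-al), Complex 0 be, Complex 0 (-be)}"
    using eig card al0 be0 by (intro conjI) auto
  show ?thesis unfolding elliptic_elliptic_def
    by (rule exI[of _ C], rule exI[of _ 1], rule exI[of _ al], rule exI[of _ be]) (rule all)
qed

lemma FF_gen:
  assumes disc: "(m11 - m22)^2 + 4 * m12 * m21 < 0"
  shows "focus_focus (kJ 1 0 0 1) (kJ m11 m12 m21 m22)"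
proof -
  define s where "s = sqrt (- ((m11 - m22)^2 + 4 * m12 * m21))"
  have s0: "s > 0" using disc unfolding s_def by simp
  have ss: "s * s = - ((m11 - m22)^2 + 4 * m12 * m21)" using disc unfolding s_def by simp
  define C where "C = \<bar>m11 + m22\<bar> + 1"
  define al where "al = s / 2"
  define be where "be = C + (m11 + m22) / 2"
  have al0: "al \<noteq> 0" unfolding al_def using s0 by simp
  have be0: "be \<noteq> 0" unfolding be_def C_def
    by (cases "m11 + m22 \<ge> 0") (simp_all add: field_simps)
  have sum: "2 * be = (C + 1 * m11) + (C + 1 * m22)" unfolding be_def by simp
  have prod: "al^2 + be^2 = (C + 1 * m11) * (C + 1 * m22) - (1 * m12) * (1 * m21)"
  proof -
    have a2: "2 * al = s" and b2: "2 * be = 2 * C + m11 + m22" unfolding al_def be_def by simp_all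
    have "4 * (al^2 + be^2) = (2 * al) * (2 * al) + (2 * be) * (2 * be)" by (simp add: power2_eq_square)
    also have "\<dots> = s * s + (2 * C + m11 + m22) * (2 * C + m11 + m22)" unfolding a2 b2 ..
    also have "\<dots> = 4 * ((C + 1 * m11) * (C + 1 * m22) - (1 * m12) * (1 * m21))"
      unfolding ss by (simp add: algebra_simps power2_eq_square)
    finally have "4 * (al^2 + be^2) = 4 * ((C + 1 * m11) * (C + 1 * m22) - (1 * m12) * (1 * m21))" .
    then show ?thesis by simp
  qed
  have eig: "eigenvalues (C *\<^sub>R kJ 1 0 0 1 + 1 *\<^sub>R kJ m11 m12 m21 m22) =
     {Complex al be, Complex al (-be), Complex (-al) be, Complex (-al) (-be)}"
    unfolding kJ_lin by (rule eig_FF[OF sum prod])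
  have all: "al \<noteq> 0 \<and> be \<noteq> 0 \<and>
     eigenvalues (C *\<^sub>R kJ 1 0 0 1 + 1 *\<^sub>R kJ m11 m12 m21 m22) = {Complex al be, Complex al (-be), Complex (-al) be, Complex (-al) (-be)}"
    using eig al0 be0 by (intro conjI)
  show ?thesis unfolding focus_focus_def
    by (rule exI[of _ C], rule exI[of _ 1], rule exI[of _ al], rule exI[of _ be]) (rule all)
qed

section \<open>Discriminants\<close>

lemma disc_11:
  fixes R1 R2 t :: real
  assumes "0 < R1" "0 < R2"
  shows "((1 - t + t * 1 * 1) / R1 - 1 * t / R2)^2 + 4 * (- t / R1) * (- 1 * t / R2) > 0"
proof (cases "t = 0")
  case True then show ?thesis using assms by simp
next
  case False
  have tt: "0 < t * t" using False not_real_square_gt_zero by blast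
  have "4 * (- t / R1) * (- 1 * t / R2) > 0" using assms tt by (simp add: field_simps)
  then show ?thesis by (smt (verit) zero_le_power2)
qed

lemma disc_m11:
  fixes R1 R2 t :: real
  assumes "0 < R1" "0 < R2"
  shows "((1 - t + t * (-1) * 1) / R1 - (-1) * t / R2)^2 + 4 * (- t / R1) * (- 1 * t / R2) > 0"
proof (cases "t = 0")
  case True then show ?thesis using assms by simp
next
  case False
  have tt: "0 < t * t" using False not_real_square_gt_zero by blast
  have "4 * (- t / R1) * (- 1 * t / R2) > 0" using assms tt by (simp add: field_simps)
  then show ?thesis by (smt (verit) zero_le_power2)
qed

lemma disc_mm:
  fixes R1 R2 t :: real
  assumes "0 < R1" "R1 < R2" "0 \<le> t" "t \<le> 1"
  shows "((1 - t + t * (-1) * (-1)) / R1 - (-1) * t / R2)^2 + 4 * (- t / R1) * (- (-1) * t / R2) > 0"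
proof -
  have R2: "0 < R2" using assms by linarith
  have eq: "((1 - t + t * (-1) * (-1)) / R1 - (-1) * t / R2)^2 + 4 * (- t / R1) * (- (-1) * t / R2)
      = ((R2 - t*R1)^2 + 4*t*R1*R2*(1-t)) / (R1*R2)^2"
    using assms R2 by (simp add: field_simps power2_eq_square)
  have "t*R1 < R2" using assms by (smt (verit) mult_left_le_one_le)
  then have "(R2 - t*R1)^2 > 0" by simp
  moreover have "4*t*R1*R2*(1-t) \<ge> 0" using assms R2 by simp
  ultimately have "(R2 - t*R1)^2 + 4*t*R1*R2*(1-t) > 0" by linarith
  then show ?thesis unfolding eq using assms R2 by simp
qed

lemma disc_1m_eq:
  fixes R1 R2 t :: real
  assumes "0 < R1" "0 < R2"
  defines "q \<equiv> sqrt (R1 * R2)"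
  shows "((1 - t + t * 1 * (-1)) / R1 - 1 * t / R2)^2 + 4 * (- t / R1) * (- (-1) * t / R2)
     = ((R2 - t * (2*R2 + R1 + 2*q)) * (R2 - t * (2*R2 + R1 - 2*q))) / (R1*R2)^2"
proof -
  have qq: "q * q = R1 * R2" unfolding q_def using assms by simp
  have "((R2 - t * (2*R2 + R1 + 2*q)) * (R2 - t * (2*R2 + R1 - 2*q)))
      = ((1 - 2*t)*R2 - t*R1)^2 - 4*t*t*(q*q)" by (simp add: algebra_simps power2_eq_square)
  also have "\<dots> = ((1 - 2*t)*R2 - t*R1)^2 - 4*t*t*(R1*R2)" unfolding qq ..
  finally have e: "((R2 - t * (2*R2 + R1 + 2*q)) * (R2 - t * (2*R2 + R1 - 2*q))) = ((1 - 2*t)*R2 - t*R1)^2 - 4*t*t*(R1*R2)" .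
  show ?thesis unfolding e using assms by (simp add: field_simps power2_eq_square)
qed

section \<open>Type of the poles\<close>

lemma nondeg_pole:
  assumes e1: "e1 = 1 \<or> e1 = -1" and e2: "e2 = 1 \<or> e2 = -1" and R: "0 < R1" "0 < R2"
    and disc: "((1 - t + t * e1 * e2) / R1 - e1 * t / R2)^2 + 4 * (- t / R1) * (- e2 * t / R2) \<noteq> 0"
  shows "nondegenerate_at R1 R2 t (pole e1 e2) e1 e2"
proof -
  have ee: "e2 * e2 = 1" using e2 by auto
  have c: "R1 * (- t / R1) = (e2 * R2) * (- e2 * t / R2)" using R ee by (simp add: field_simps)
  have "e2 * R2 \<noteq> 0" using e2 R by auto
  then show ?thesis
    unfolding nondegenerate_at_def Omega_pole AL_pole[OF e1 e2 R(1)[THEN less_imp_neq, symmetric] R(2)[THEN less_imp_neq, symmetric]]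
      AH_pole[OF e1 e2 R(1)[THEN less_imp_neq, symmetric] R(2)[THEN less_imp_neq, symmetric]]
    using cartan_gen[OF _ _ c disc] R by simp
qed

lemma EE_pole:
  assumes e1: "e1 = 1 \<or> e1 = -1" and e2: "e2 = 1 \<or> e2 = -1" and R: "0 < R1" "0 < R2"
    and disc: "((1 - t + t * e1 * e2) / R1 - e1 * t / R2)^2 + 4 * (- t / R1) * (- e2 * t / R2) > 0"
  shows "nondeg_EE R1 R2 t e1 e2"
  unfolding nondeg_EE_def
  using nondeg_pole[OF e1 e2 R] disc EE_gen[OF disc]
  unfolding AL_pole[OF e1 e2 R(1)[THEN less_imp_neq, symmetric] R(2)[THEN less_imp_neq, symmetric]]
      AH_pole[OF e1 e2 R(1)[THEN less_imp_neq, symmetric] R(2)[THEN less_imp_neq, symmetric]]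
  by simp

lemma FF_pole:
  assumes e1: "e1 = 1 \<or> e1 = -1" and e2: "e2 = 1 \<or> e2 = -1" and R: "0 < R1" "0 < R2"
    and disc: "((1 - t + t * e1 * e2) / R1 - e1 * t / R2)^2 + 4 * (- t / R1) * (- e2 * t / R2) < 0"
  shows "nondeg_FF R1 R2 t e1 e2"
  unfolding nondeg_FF_def
  using nondeg_pole[OF e1 e2 R] disc FF_gen[OF disc]
  unfolding AL_pole[OF e1 e2 R(1)[THEN less_imp_neq, symmetric] R(2)[THEN less_imp_neq, symmetric]]
      AH_pole[OF e1 e2 R(1)[THEN less_imp_neq, symmetric] R(2)[THEN less_imp_neq, symmetric]]
  by simp

lemma degen_pole:
  assumes e1: "e1 = 1 \<or> e1 = -1" and e2: "e2 = 1 \<or> e2 = -1" and R: "0 < R1" "0 < R2" and t: "t \<noteq> 0"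
    and disc: "((1 - t + t * e1 * e2) / R1 - e1 * t / R2)^2 + 4 * (- t / R1) * (- e2 * t / R2) = 0"
  shows "\<not> nondegenerate_at R1 R2 t (pole e1 e2) e1 e2"
proof -
  have ee: "e2 * e2 = 1" using e2 by auto
  have c: "R1 * (- t / R1) = (e2 * R2) * (- e2 * t / R2)" using R ee by (simp add: field_simps)
  have "e2 * R2 \<noteq> 0" using e2 R by auto
  moreover have "- t / R1 \<noteq> 0" using t R by simp
  ultimately show ?thesis
    unfolding nondegenerate_at_def Omega_pole AL_pole[OF e1 e2 R(1)[THEN less_imp_neq, symmetric] R(2)[THEN less_imp_neq, symmetric]]
      AH_pole[OF e1 e2 R(1)[THEN less_imp_neq, symmetric] R(2)[THEN less_imp_neq, symmetric]]
    using not_cartan_gen[OF _ _ c disc] R by simp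
qed

theorem proposition5p7:
  fixes R1 R2 t :: real
  assumes "0 < R1" and "R1 < R2" and "0 \<le> t" and "t \<le> 1"
  shows "{p. is_fixed_point R1 R2 t p} = {pole 1 1, pole (-1) 1, pole (-1) (-1), pole 1 (-1)}
    \<and> nondeg_EE R1 R2 t 1 1 \<and> nondeg_EE R1 R2 t (-1) 1 \<and> nondeg_EE R1 R2 t (-1) (-1)
    \<and> ((t < t_minus R1 R2 \<or> t > t_plus R1 R2) \<longrightarrow> nondeg_EE R1 R2 t 1 (-1))
    \<and> ((t_minus R1 R2 < t \<and> t < t_plus R1 R2) \<longrightarrow> nondeg_FF R1 R2 t 1 (-1))
    \<and> ((t = t_minus R1 R2 \<or> t = t_plus R1 R2) \<longrightarrow>
          \<not> nondegenerate_at R1 R2 t (pole 1 (-1)) 1 (-1))"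
proof -
  have R1: "0 < R1" and R2: "0 < R2" using assms by linarith+
  have fixset: "{p. is_fixed_point R1 R2 t p} = {pole 1 1, pole (-1) 1, pole (-1) (-1), pole 1 (-1)}"
  proof
    show "{p. is_fixed_point R1 R2 t p} \<subseteq> {pole 1 1, pole (-1) 1, pole (-1) (-1), pole 1 (-1)}"
    proof
      fix p assume "p \<in> {p. is_fixed_point R1 R2 t p}"
      then have "is_fixed_point R1 R2 t p" by simp
      from fixed_is_pole[OF this] R1 R2 obtain e1 e2 where
        "(e1 = 1 \<or> e1 = -1)" "(e2 = 1 \<or> e2 = -1)" "p = pole e1 e2" by auto
      then show "p \<in> {pole 1 1, pole (-1) 1, pole (-1) (-1), pole 1 (-1)}" by auto
    qed
    show "{pole 1 1, pole (-1) 1, pole (-1) (-1), pole 1 (-1)} \<subseteq> {p. is_fixed_point R1 R2 t p}"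
      using pole_fixed[of 1 1] pole_fixed[of "-1" 1] pole_fixed[of "-1" "-1"] pole_fixed[of 1 "-1"] by auto
  qed
  have EE11: "nondeg_EE R1 R2 t 1 1"
    by (rule EE_pole) (use R1 R2 disc_11[OF R1 R2] in auto)
  have EEm1: "nondeg_EE R1 R2 t (-1) 1"
    by (rule EE_pole) (use R1 R2 disc_m11[OF R1 R2] in auto)
  have EEmm: "nondeg_EE R1 R2 t (-1) (-1)"
    by (rule EE_pole) (use R1 R2 disc_mm[OF assms] in auto)
  define q where "q = sqrt (R1 * R2)"
  define cm where "cm = 2*R2 + R1 + 2*q"
  define cp where "cp = 2*R2 + R1 - 2*q"
  have q0: "q > 0" unfolding q_def using R1 R2 by simp
  have "q * q < R2 * R2" unfolding q_def using R1 R2 assms(2) by simp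
  then have qR2: "q < R2" using q0 R2 by (metis abs_of_pos abs_square_less_1 less_le mult_less_cancel_right_pos mult_strict_mono' not_less order.strict_trans)
  have cm0: "cm > 0" unfolding cm_def using q0 R1 R2 by simp
  have cp0: "cp > 0" unfolding cp_def using qR2 R1 by simp
  have cpm: "cp < cm" unfolding cp_def cm_def using q0 by simp
  have tm: "t_minus R1 R2 = R2 / cm" unfolding t_minus_def cm_def q_def ..
  have tp: "t_plus R1 R2 = R2 / cp" unfolding t_plus_def cp_def q_def ..
  define D where "D = ((1 - t + t * 1 * (-1)) / R1 - 1 * t / R2)^2 + 4 * (- t / R1) * (- (-1) * t / R2)"
  have Deq: "D = ((R2 - t * cm) * (R2 - t * cp)) / (R1*R2)^2"
    unfolding D_def cm_def cp_def q_def by (rule disc_1m_eq[OF R1 R2])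
  have den: "(R1*R2)^2 > 0" using R1 R2 by simp
  have lm: "t < t_minus R1 R2 \<longleftrightarrow> t * cm < R2" unfolding tm using cm0 by (simp add: pos_less_divide_eq)
  have lp: "t < t_plus R1 R2 \<longleftrightarrow> t * cp < R2" unfolding tp using cp0 by (simp add: pos_less_divide_eq)
  have gm: "t > t_minus R1 R2 \<longleftrightarrow> t * cm > R2" unfolding tm using cm0 by (simp add: pos_divide_less_eq)
  have gp: "t > t_plus R1 R2 \<longleftrightarrow> t * cp > R2" unfolding tp using cp0 by (simp add: pos_divide_less_eq)
  have em: "t = t_minus R1 R2 \<longleftrightarrow> t * cm = R2" unfolding tm using cm0 by (auto simp: field_simps)
  have ep: "t = t_plus R1 R2 \<longleftrightarrow> t * cp = R2" unfolding tp using cp0 by (auto simp: field_simps)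
  have tcm: "t * cp \<le> t * cm" using cpm assms(3) by (simp add: mult_left_mono)
  have EE1m: "(t < t_minus R1 R2 \<or> t > t_plus R1 R2) \<longrightarrow> nondeg_EE R1 R2 t 1 (-1)"
  proof
    assume h: "t < t_minus R1 R2 \<or> t > t_plus R1 R2"
    have "(R2 - t * cm) * (R2 - t * cp) > 0"
    proof (cases "t < t_minus R1 R2")
      case True
      then have "R2 - t * cm > 0" "R2 - t * cp > 0" using lm tcm by linarith+
      then show ?thesis by simp
    next
      case False
      then have "t > t_plus R1 R2" using h by simp
      then have "R2 - t * cm < 0" "R2 - t * cp < 0" using gp tcm by linarith+
      then show ?thesis by (simp add: mult_neg_neg)
    qed
    then have "D > 0" unfolding Deq using den by simp
    then show "nondeg_EE R1 R2 t 1 (-1)"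
      by (intro EE_pole) (use R1 R2 D_def in auto)
  qed
  have FF1m: "(t_minus R1 R2 < t \<and> t < t_plus R1 R2) \<longrightarrow> nondeg_FF R1 R2 t 1 (-1)"
  proof
    assume h: "t_minus R1 R2 < t \<and> t < t_plus R1 R2"
    then have "R2 - t * cm < 0" "R2 - t * cp > 0" using gm lp by linarith+
    then have "(R2 - t * cm) * (R2 - t * cp) < 0" by (simp add: mult_neg_pos)
    then have "D < 0" unfolding Deq using den by (simp add: divide_neg_pos)
    then show "nondeg_FF R1 R2 t 1 (-1)"
      by (intro FF_pole) (use R1 R2 D_def in auto)
  qed
  have DG1m: "(t = t_minus R1 R2 \<or> t = t_plus R1 R2) \<longrightarrow> \<not> nondegenerate_at R1 R2 t (pole 1 (-1)) 1 (-1)"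
  proof
    assume h: "t = t_minus R1 R2 \<or> t = t_plus R1 R2"
    then have "(R2 - t * cm) * (R2 - t * cp) = 0" using em ep by auto
    then have D0: "D = 0" unfolding Deq by simp
    have "t \<noteq> 0" using h R2 cm0 cp0 unfolding tm tp by auto
    then show "\<not> nondegenerate_at R1 R2 t (pole 1 (-1)) 1 (-1)"
      by (intro degen_pole) (use R1 R2 D0 D_def in auto)
  qed
  show ?thesis using fixset EE11 EEm1 EEmm EE1m FF1m DG1m by blast
qed

end
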